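(* Let $d_0<d_1<d_2<\cdots$ be the increasing enumeration of $\mathcal{D}=\{m\ge1:\ c_m=0\}$ (so $d_0=3$), and for $n\ge0$ let $z_n=\left(\frac{d_{4n}+1}{4}-n\right)\bmod 2\in\{0,1\}$ (here $\frac{d_{4n}+1}{4}$ is an integer). Then $z_n=1$ if and only if $n$ can be written as $n=\sum_{i=0}^{s}2^{n_i-1}(2^{n_i}-1)$ for some (possibly empty, giving $n=0$) strictly increasing sequence of integers $1<n_0<n_1<\cdots<n_s$.
   Context: For $n\in\mathbb{N}$ let $s_2(n)$ be the sum of the binary digits of $n$ and $t_n=s_2(n)\bmod 2$ (the Prouhet–Thue–Morse sequence). Let $F(X)=\sum_{n\ge1}t_nX^n\in\mathbb{F}_2[[X]]$ and let $G(X)=\sum_{n\ge1}c_nX^n\in\mathbb{F}_2[[X]]$ be its compositional inverse, i.e. $F(G(X))=G(F(X))=X$. The $c_n$ are identified with integers in $\{0,1\}$. *)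

theory Defs
  imports "HOL-Computational_Algebra.Formal_Power_Series" "HOL-Library.Z2" "HOL-Library.Infinite_Set"
begin

fun s2 :: "nat \<Rightarrow> nat" where
  "s2 n = (if n = 0 then 0 else n mod 2 + s2 (n div 2))"

definition ptm :: "nat \<Rightarrow> nat" where
  "ptm n = s2 n mod 2"

definition tmF :: "bit fps" where
  "tmF = Abs_fps (\<lambda>n. if n \<ge> 1 then of_nat (ptm n) else 0)"

definition tmG :: "bit fps" where
  "tmG = fps_inv tmF"

definition cc :: "nat \<Rightarrow> nat" where
  "cc n = (if fps_nth tmG n = 0 then 0 else 1)"

definition DD :: "nat set" where
  "DD = {m. m \<ge> 1 \<and> cc m = 0}"

definition dd :: "nat \<Rightarrow> nat" where
  "dd k = Infinite_Set.enumerate DD k"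

definition zz :: "nat \<Rightarrow> int" where
  "zz n = ((int (dd (4*n)) + 1) div 4 - int n) mod 2"

end

theory Submission
  imports Defs
begin


fun bb :: "nat \<Rightarrow> nat" where
  "bb t = (if t = 0 then 0 else 4 * bb (t div 2) + 8 * (t mod 2))"

lemma bb_rec: "bb t = 4 * bb (t div 2) + 8 * (t mod 2)"
  by (cases "t = 0") simp_all

declare bb.simps[simp del]

lemma bb_0[simp]: "bb 0 = 0" by (simp add: bb.simps)

lemma bb_mod4: "bb t mod 4 = 0"
  by (subst bb_rec) simp

lemma bb_Suc: "bb (Suc t) \<ge> bb t + 8"
proof (induction t rule: less_induct)
  case (less t)
  show ?case
  proof (cases "even t")
    case True
    then obtain s where s: "t = 2*s" by (metis evenE)
    have "bb t = 4 * bb s" using bb_rec[of t] s by simp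
    moreover have "bb (Suc t) = 4 * bb s + 8" using bb_rec[of "Suc t"] s by simp
    ultimately show ?thesis by simp
  next
    case False
    then obtain s where s: "t = 2*s+1" by (metis oddE)
    have "bb (Suc s) \<ge> bb s + 8" using less s by auto
    moreover have "bb t = 4 * bb s + 8" using bb_rec[of t] s by simp
    moreover have "bb (Suc t) = 4 * bb (Suc s)" using bb_rec[of "Suc t"] s by simp
    ultimately show ?thesis by simp
  qed
qed

lemma bb_smono: "strict_mono bb"
proof -
  have "bb t < bb (Suc t)" for t using bb_Suc[of t] by linarith
  then have "\<forall>t. bb t < bb (Suc t)" by blast
  then show ?thesis by (simp add: strict_mono_Suc_iff)
qed

definition MM :: "nat set" where "MM = range bb"

lemma MM_mod4: "m \<in> MM \<Longrightarrow> m mod 4 = 0"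
  unfolding MM_def using bb_mod4 by auto

lemma MM_gap: "x \<in> MM \<Longrightarrow> y \<in> MM \<Longrightarrow> x < y \<Longrightarrow> x + 4 \<le> y"
  using MM_mod4[of x] MM_mod4[of y] by presburger

lemma MM_4: "4*q \<in> MM \<longleftrightarrow> q \<in> MM \<or> (q \<ge> 2 \<and> q - 2 \<in> MM)"
proof
  assume "4*q \<in> MM"
  then obtain t where t: "4*q = bb t" unfolding MM_def by auto
  hence "q = bb (t div 2) + 2*(t mod 2)" using bb_rec[of t] by simp
  then show "q \<in> MM \<or> (q \<ge> 2 \<and> q - 2 \<in> MM)"
  proof (cases "even t")
    case True
    then show ?thesis using \<open>q = _\<close> by (auto simp: MM_def)
  next
    case False
    then have "q = bb (t div 2) + 2" using \<open>q = _\<close> by presburger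
    then show ?thesis by (auto simp: MM_def)
  qed
next
  assume "q \<in> MM \<or> (q \<ge> 2 \<and> q - 2 \<in> MM)"
  then show "4*q \<in> MM"
  proof
    assume "q \<in> MM" then obtain t where "q = bb t" unfolding MM_def by auto
    hence "4*q = bb (2*t)" using bb_rec[of "2*t"] by simp
    thus ?thesis unfolding MM_def by auto
  next
    assume "q \<ge> 2 \<and> q - 2 \<in> MM" then obtain t where "q = bb t + 2" unfolding MM_def
      by (metis image_iff le_add_diff_inverse2)
    hence "4*q = bb (2*t+1)" using bb_rec[of "2*t+1"] by simp
    thus ?thesis unfolding MM_def by auto
  qed
qed

definition aexp :: "nat \<Rightarrow> bool" where
  "aexp j = (j \<ge> 1 \<and> (j \<in> MM \<or> (j \<ge> 2 \<and> j - 2 \<in> MM)))"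

lemma aexp_odd: "odd j \<Longrightarrow> \<not> aexp j"
proof
  assume o: "odd j" and a: "aexp j"
  then have "j \<in> MM \<or> (j \<ge> 2 \<and> j - 2 \<in> MM)" unfolding aexp_def by auto
  then show False
  proof
    assume "j \<in> MM" then have "j mod 4 = 0" by (rule MM_mod4)
    then show False using o by presburger
  next
    assume "j \<ge> 2 \<and> j - 2 \<in> MM" then have "(j-2) mod 4 = 0" "j \<ge> 2" using MM_mod4 by auto
    then show False using o by presburger
  qed
qed

lemma aexp_4: "q \<ge> 1 \<Longrightarrow> aexp (4*q) = aexp q"
proof -
  assume q: "q \<ge> 1"
  have "4*q - 2 \<notin> MM"
  proof
    assume "4*q - 2 \<in> MM" then have "(4*q-2) mod 4 = 0" by (rule MM_mod4)
    then show False using q by presburger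
  qed
  thus ?thesis unfolding aexp_def using MM_4[of q] q by auto
qed

lemma aexp_42: "q \<ge> 1 \<Longrightarrow> aexp (4*q+2) = aexp q"
proof -
  assume q: "q \<ge> 1"
  have "4*q + 2 \<notin> MM"
  proof
    assume "4*q + 2 \<in> MM" then have "(4*q+2) mod 4 = 0" by (rule MM_mod4)
    then show False by presburger
  qed
  thus ?thesis unfolding aexp_def using MM_4[of q] q by auto
qed

lemma aexp_rec: "j \<ge> 4 \<Longrightarrow> aexp j = (aexp (j-1) \<noteq> aexp (j div 4))"
proof -
  assume j: "j \<ge> 4"
  define q where "q = j div 4"
  have q1: "q \<ge> 1" using j q_def by auto
  have jq: "j = 4*q + j mod 4" using q_def by simp
  have C: "aexp (j div 4) = aexp q" using q_def by simp
  consider "j mod 4 = 0" | "j mod 4 = 1" | "j mod 4 = 2" | "j mod 4 = 3" by linarith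
  then show ?thesis
  proof cases
    case 1
    hence jj: "j = 4*q + 0" using jq by simp
    hence "j = 4*q" "odd (j-1)" using q1 by simp_all
    then have A: "aexp j = aexp q" and B: "\<not> aexp (j-1)" using aexp_4[OF q1] aexp_odd[of "j-1"] by auto
    then show ?thesis using C by blast
  next
    case 2
    hence jj: "j = 4*q + 1" using jq by simp
    hence "j - 1 = 4*q" "odd j" using q1 by simp_all
    then have A: "aexp (j-1) = aexp q" and B: "\<not> aexp j" using aexp_4[OF q1] aexp_odd[of j] by auto
    then show ?thesis using C by blast
  next
    case 3
    hence jj: "j = 4*q + 2" using jq by simp
    hence "j = 4*q+2" "odd (j-1)" using q1 by simp_all
    then have A: "aexp j = aexp q" and B: "\<not> aexp (j-1)" using aexp_42[OF q1] aexp_odd[of "j-1"] by auto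
    then show ?thesis using C by blast
  next
    case 4
    hence jj: "j = 4*q + 3" using jq by simp
    hence "j - 1 = 4*q+2" "odd j" using q1 by simp_all
    then have A: "aexp (j-1) = aexp q" and B: "\<not> aexp j" using aexp_42[OF q1] aexp_odd[of j] by auto
    then show ?thesis using C by blast
  qed
qed

definition wexp :: "nat \<Rightarrow> bool" where
  "wexp n = (n \<in> {1,2,3} \<or> (n \<ge> 4 \<and> aexp (n div 4)))"

lemma aexp_small: "\<not> aexp 0" "\<not> aexp 1" "aexp 2" "\<not> aexp 3"
proof -
  have "0 \<in> MM" unfolding MM_def by (metis bb_0 rangeI)
  moreover have "1 \<notin> MM" "3 \<notin> MM" using MM_mod4[of 1] MM_mod4[of 3] by auto
  ultimately have "0 \<in> MM" "1 \<notin> MM" "3 \<notin> MM" by auto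
  then show "\<not> aexp 0" "\<not> aexp 1" "aexp 2" "\<not> aexp 3" unfolding aexp_def by auto
qed

lemma wexp_rec: "n \<ge> 1 \<Longrightarrow> wexp n = (((4 dvd n \<and> wexp (n div 4)) \<noteq> (n = 1)) \<noteq> wexp (n-1))"
proof -
  assume n: "n \<ge> 1"
  consider "n \<le> 4" | "n \<ge> 5" "\<not> 4 dvd n" | "n \<ge> 5" "4 dvd n" by linarith
  then show ?thesis
  proof cases
    case 1
    then have "n = 1 \<or> n = 2 \<or> n = 3 \<or> n = 4" using n by auto
    then show ?thesis unfolding wexp_def using aexp_small by auto
  next
    case 2
    then have "n div 4 = (n-1) div 4" by presburger
    then show ?thesis using 2 unfolding wexp_def by auto
  next
    case 3
    then obtain j where jj: "n = 4*j" "j \<ge> 2" by auto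
    have "(n-1) div 4 = j - 1" using jj by presburger
    hence w1: "wexp (n-1) = aexp (j-1)" using jj unfolding wexp_def by auto
    have w2: "wexp n = aexp j" using jj unfolding wexp_def by auto
    have "aexp j = (wexp j \<noteq> aexp (j-1))"
    proof -
      have "j = 2 \<or> j = 3 \<or> j \<ge> 4" using jj by auto
      moreover have "j \<ge> 4 \<Longrightarrow> ?thesis" using aexp_rec[of j] unfolding wexp_def by auto
      ultimately show ?thesis using aexp_small unfolding wexp_def by auto
    qed
    then show ?thesis using w1 w2 jj by auto
  qed
qed



lemma of_nat_bit: "(of_nat k :: bit) = of_bool (odd k)"
  by (induction k) auto

lemma ob_add: "(of_bool p + of_bool q :: bit) = of_bool (p \<noteq> q)"
  by auto

lemma bit_double: "(x::bit) + x = 0"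
  by (cases x) auto

lemma fps_bit_double: "(f::bit fps) + f = 0"
  by (rule fps_ext) (simp only: fps_add_nth bit_double fps_zero_nth)

lemma two_fps_bit: "(2::bit fps) = 0"
  by (metis one_add_one fps_bit_double)

lemma test_alg:
  fixes G W X :: "bit fps"
  assumes H: "(1+G^2)*(X + (1+G)*X^2) = G" and W: "W = X + X*G" and two: "(2::bit fps) = 0"
  shows "W^4 + W + X + X*W = 0"
proof -
  have id: "W^4 + W + X + X*W = (1+W)*X*((1+G^2)*(X + (1+G)*X^2) - G) + 2*(X + X*G + X^2*G - X^3 - X^3*G - X^3*G^2 - X^3*G^3 + X^4*G + 2*X^4*G^2 + X^4*G^3)"
    unfolding W by algebra
  show ?thesis unfolding id H two by simp
qed

lemma bit_sq: "(x::bit) * x = x"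
  by (cases x) auto

lemma frob: fixes f :: "bit fps" shows "(fps_nth (f*f) n) = (if even n then (fps_nth f (n div 2)) else 0)"
proof -
  define h where "h = (\<lambda>i. (fps_nth f i) * (fps_nth f (n-i)))"
  have e0: "(fps_nth (f*f) n) = sum h {0..n}" unfolding h_def by (rule fps_mult_nth)
  define L where "L = {i. 2*i < n}"
  define U where "U = {i. n < 2*i \<and> i \<le> n}"
  define Mi where "Mi = {i. 2*i = n}"
  have split: "{0..n} = L \<union> (Mi \<union> U)" by (auto simp: L_def U_def Mi_def)
  have fin: "finite L" "finite Mi" "finite U"
    by (rule finite_subset[of _ "{0..n}"], auto simp: L_def U_def Mi_def)+
  have d2: "sum h (Mi \<union> U) = sum h Mi + sum h U"
    by (rule sum.union_disjoint) (use fin in \<open>auto simp: U_def Mi_def\<close>)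
  have d1: "sum h (L \<union> (Mi \<union> U)) = sum h L + sum h (Mi \<union> U)"
    by (rule sum.union_disjoint) (use fin in \<open>auto simp: L_def U_def Mi_def\<close>)
  have "sum h {0..n} = sum h L + (sum h Mi + sum h U)"
    unfolding split d1 d2 ..
  moreover have "sum h U = sum h L"
  proof (rule sum.reindex_bij_witness[of U "\<lambda>i. n - i" "\<lambda>i. n - i"])
    show "\<And>a. a \<in> U \<Longrightarrow> n - (n - a) = a" by (auto simp: U_def)
    show "\<And>a. a \<in> U \<Longrightarrow> n - a \<in> L" by (auto simp: U_def L_def)
    show "\<And>b. b \<in> L \<Longrightarrow> n - (n - b) = b" by (auto simp: L_def)
    show "\<And>b. b \<in> L \<Longrightarrow> n - b \<in> U" by (auto simp: U_def L_def)
    show "\<And>a. a \<in> U \<Longrightarrow> h (n - a) = h a" by (auto simp: U_def h_def mult.commute)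
  qed
  moreover have "sum h Mi = (if even n then (fps_nth f (n div 2)) else 0)"
  proof (cases "even n")
    case True
    then have "Mi = {n div 2}" by (auto simp: Mi_def)
    moreover have "n - n div 2 = n div 2" using True by auto
    ultimately show ?thesis using True by (simp add: h_def bit_sq del: mult_bit_eq_and)
  next
    case False
    then have "Mi = {}" by (auto simp: Mi_def)
    then show ?thesis using False by simp
  qed
  ultimately show ?thesis using e0 bit_double[of "sum h L"]
    by (simp del: add_bit_eq_xor add: algebra_simps)
qed

lemma frob4: fixes f :: "bit fps" shows "(fps_nth (f^4) n) = (if 4 dvd n then (fps_nth f (n div 4)) else 0)"
proof -
  have "f^4 = (f*f)*(f*f)" by (simp add: power4_eq_xxxx mult.assoc)
  then have "(fps_nth (f^4) n) = (if even n then (if even (n div 2) then (fps_nth f (n div 2 div 2)) else 0) else 0)"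
    by (simp only: frob)
  then show ?thesis by (auto simp: div_mult2_eq[symmetric])
qed



lemma s2_rec: "s2 n = n mod 2 + s2 (n div 2)"
  by (subst s2.simps) (simp del: s2.simps add: s2.simps[of 0])

lemma tmF_nth: "fps_nth tmF n = of_bool (odd (s2 n))"
proof (cases "n = 0")
  case True
  then show ?thesis unfolding tmF_def by (simp del: s2.simps add: s2.simps[of 0])
next
  case False
  then show ?thesis unfolding tmF_def ptm_def by (simp del: s2.simps add: of_nat_bit)
qed

lemma s2_0: "s2 0 = 0" by (simp add: s2.simps[of 0] del: s2.simps)
lemma s2_1: "s2 1 = 1" using s2_rec[of 1] s2_0 by (simp del: s2.simps)

lemma tmF_0: "fps_nth tmF 0 = 0" and tmF_1: "fps_nth tmF 1 = 1"
proof -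
  have "s2 (Suc 0) = 1" using s2_1 by simp
  then show "fps_nth tmF 0 = 0" "fps_nth tmF 1 = 1" by (simp_all add: tmF_nth s2_0 del: s2.simps)
qed

lemma tmG_0: "fps_nth tmG 0 = 0"
  unfolding tmG_def by (simp add: fps_inv_def)

lemma one_X_mult_nth: fixes g :: "bit fps" shows "fps_nth ((1 + fps_X) * g) n = fps_nth g n + (if n = 0 then 0 else fps_nth g (n-1))"
proof -
  have "(1 + fps_X) * g = g + fps_X * g" by (simp add: distrib_right)
  then show ?thesis by (simp only: fps_add_nth fps_X_mult_nth)
qed

lemma bit_ob_add3: "(of_bool a + of_bool b + of_bool c :: bit) = of_bool ((a \<noteq> b) \<noteq> c)"
  by auto

lemma E_nth: "fps_nth (tmF + (1 + fps_X) * tmF^2) n = of_bool (odd n)"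
proof -
  have sq: "tmF^2 = tmF*tmF" by (simp add: power2_eq_square)
  have "fps_nth ((1 + fps_X) * tmF^2) n = fps_nth tmF (n div 2)"
  proof (cases "n = 0")
    case True then show ?thesis unfolding sq one_X_mult_nth frob by (simp add: tmF_0 del: add_bit_eq_xor)
  next
    case False
    then show ?thesis unfolding sq one_X_mult_nth frob
      by (cases "even n") (auto simp del: add_bit_eq_xor mult_bit_eq_and elim!: oddE)
  qed
  then have "fps_nth (tmF + (1 + fps_X) * tmF^2) n = of_bool (odd (s2 n)) + of_bool (odd (s2 (n div 2)))"
    by (simp add: tmF_nth del: add_bit_eq_xor s2.simps)
  also have "\<dots> = of_bool (odd n)" unfolding ob_add
    by (subst s2_rec[of n]) (auto simp del: s2.simps)
  finally show ?thesis .
qed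

abbreviation EE where "EE \<equiv> tmF + (1 + fps_X) * tmF^2"

lemma E_mult: "(1 + fps_X^2) * EE = fps_X"
proof (rule fps_ext)
  fix n
  have "(1 + fps_X^2) * EE = EE + fps_X^2 * EE" by (simp add: distrib_right)
  then have "fps_nth ((1 + fps_X^2) * EE) n = of_bool (odd n) + (if n < 2 then 0 else of_bool (odd (n-2)))"
    by (simp only: fps_add_nth[of EE "fps_X^2 * EE"] fps_X_power_mult_nth E_nth)
  also have "\<dots> = fps_nth fps_X n"
    by (cases "n < 2") (auto simp del: add_bit_eq_xor simp: less_2_cases_iff)
  finally show "fps_nth ((1 + fps_X^2) * EE) n = fps_nth fps_X n" .
qed

lemma H_eq: "(1 + tmG^2) * (fps_X + (1 + tmG) * fps_X^2) = tmG"
proof -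
  have g0: "fps_nth tmG 0 = 0" by (rule tmG_0)
  have FG: "tmF oo tmG = fps_X" unfolding tmG_def
    by (rule fps_inv_right) (use tmF_0 tmF_1 in auto)
  have XG: "fps_X oo tmG = tmG" using g0 by simp
  have "((1 + fps_X^2) * EE) oo tmG = fps_X oo tmG" by (simp only: E_mult)
  also have "\<dots> = tmG" by (rule XG)
  finally have "((1 + fps_X^2) * EE) oo tmG = tmG" .
  moreover have "((1 + fps_X^2) * EE) oo tmG = (1 + tmG^2) * (fps_X + (1 + tmG) * fps_X^2)"
    by (simp only: fps_compose_mult_distrib[OF g0] fps_compose_add_distrib fps_compose_1
          fps_compose_power[OF g0, symmetric] XG FG)
  ultimately show ?thesis by simp
qed

definition WW :: "bit fps" where "WW = fps_X + fps_X * tmG"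

lemma WW_eq: "WW^4 + WW + fps_X + fps_X*WW = 0"
  by (rule test_alg[OF H_eq WW_def two_fps_bit])

lemma bit_solve: "(a::bit) + b + c + d = 0 \<Longrightarrow> b = a + c + d"
  by (cases a; cases b; cases c; cases d) auto

lemma WW_rec: "fps_nth WW n = (if 4 dvd n then fps_nth WW (n div 4) else 0) + fps_nth fps_X n + fps_nth (fps_X*WW) n"
proof -
  have "fps_nth (WW^4 + WW + fps_X + fps_X*WW) n = 0" using WW_eq by simp
  then have "fps_nth (WW^4) n + fps_nth WW n + fps_nth fps_X n + fps_nth (fps_X*WW) n = 0"
    by (simp only: fps_add_nth)
  then have "fps_nth WW n = fps_nth (WW^4) n + fps_nth fps_X n + fps_nth (fps_X*WW) n" by (rule bit_solve)
  then show ?thesis by (simp only: frob4)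
qed

lemma WW_0: "fps_nth WW 0 = 0"
  unfolding WW_def by simp

lemma WW_nth: "fps_nth WW n = of_bool (wexp n)"
proof (induction n rule: less_induct)
  case (less n)
  show ?case
  proof (cases "n = 0")
    case True
    then show ?thesis using WW_0 by (simp add: wexp_def)
  next
    case False
    then have n1: "n \<ge> 1" by simp
    have ih1: "fps_nth WW (n div 4) = of_bool (wexp (n div 4))" using less False by simp
    have ih2: "fps_nth WW (n - 1) = of_bool (wexp (n - 1))" using less False by simp
    have "fps_nth WW n = of_bool (4 dvd n \<and> wexp (n div 4)) + of_bool (n = 1) + of_bool (wexp (n-1))"
      using WW_rec[of n] ih1 ih2 False by (simp del: add_bit_eq_xor)
    also have "\<dots> = of_bool (wexp n)" using wexp_rec[OF n1] by (simp only: bit_ob_add3)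
    finally show ?thesis .
  qed
qed

lemma tmG_nth: "m \<ge> 1 \<Longrightarrow> fps_nth tmG m = of_bool (wexp (m+1))"
proof -
  assume m: "m \<ge> 1"
  have "fps_nth WW (m+1) = fps_nth tmG m" unfolding WW_def using m by simp
  then show ?thesis using WW_nth by simp
qed

lemma cc_eq: "m \<ge> 1 \<Longrightarrow> cc m = 0 \<longleftrightarrow> \<not> wexp (m+1)"
  unfolding cc_def using tmG_nth by simp



lemma enum_card_aux:
  fixes S :: "nat set"
  assumes S: "infinite S"
  shows "{y\<in>S. y < enumerate S n} = enumerate S ` {..<n}"
proof
  show "enumerate S ` {..<n} \<subseteq> {y\<in>S. y < enumerate S n}"
    using S by (auto intro: enumerate_in_set)
  show "{y\<in>S. y < enumerate S n} \<subseteq> enumerate S ` {..<n}"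
  proof
    fix y assume y: "y \<in> {y\<in>S. y < enumerate S n}"
    then obtain i where i: "enumerate S i = y" using enumerate_Ex[OF S] by blast
    then have "i < n" using y S by auto
    then show "y \<in> enumerate S ` {..<n}" using i by auto
  qed
qed

lemma enum_card:
  fixes S :: "nat set"
  assumes S: "infinite S"
  shows "card {y\<in>S. y < enumerate S n} = n"
  unfolding enum_card_aux[OF S]
  by (subst card_image) (use inj_enumerate[OF S] in \<open>auto intro: inj_on_subset\<close>)

lemma enum_by_card:
  fixes S :: "nat set"
  assumes S: "infinite S" and x: "x \<in> S"
  shows "enumerate S (card {y\<in>S. y < x}) = x"
proof -
  obtain n where "enumerate S n = x" using enumerate_Ex[OF S x] by blast
  then show ?thesis using enum_card[OF S, of n] by simp
qed

definition ZZ :: "nat set" where "ZZ = {k. \<not> aexp (Suc k)}"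

lemma even_in_ZZ: "even k \<Longrightarrow> k \<in> ZZ"
  unfolding ZZ_def using aexp_odd by simp

lemma ZZ_inf: "infinite ZZ"
  unfolding infinite_nat_iff_unbounded
proof
  fix m show "\<exists>n>m. n \<in> ZZ" using even_in_ZZ[of "2*m+2"] by (intro exI[of _ "2*m+2"]) auto
qed

lemma DD_char: "DD = {m. m \<ge> 3 \<and> (m - 3) div 4 \<in> ZZ}"
proof -
  have "m \<in> DD \<longleftrightarrow> m \<ge> 3 \<and> (m - 3) div 4 \<in> ZZ" for m
  proof (cases "m \<ge> 3")
    case True
    have "(m+1) div 4 = Suc ((m - 3) div 4)" using True by presburger
    then show ?thesis unfolding DD_def ZZ_def using True cc_eq[of m] by (auto simp: wexp_def)
  next
    case False
    then have "m = 0 \<or> m = 1 \<or> m = 2" by auto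
    then show ?thesis unfolding DD_def using cc_eq[of m] by (auto simp: wexp_def)
  qed
  then show ?thesis by auto
qed

lemma DD_inf: "infinite DD"
  unfolding infinite_nat_iff_unbounded
proof
  fix m show "\<exists>n>m. n \<in> DD"
    using even_in_ZZ[of "2*m"] unfolding DD_char by (intro exI[of _ "4*(2*m)+3"]) auto
qed

lemma dd_eq: "dd (4*n) = 4 * enumerate ZZ n + 3"
proof -
  define k where "k = enumerate ZZ n"
  have kZ: "k \<in> ZZ" unfolding k_def by (rule enumerate_in_set[OF ZZ_inf])
  have cn: "card {y\<in>ZZ. y < k} = n" unfolding k_def by (rule enum_card[OF ZZ_inf])
  have xD: "4*k+3 \<in> DD" unfolding DD_char using kZ by simp
  define f where "f = (\<lambda>(a::nat,r::nat). 4*a+3+r)"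
  have set_eq: "{y\<in>DD. y < 4*k+3} = f ` ({y\<in>ZZ. y < k} \<times> {..<4})"
  proof
    show "f ` ({y\<in>ZZ. y < k} \<times> {..<4}) \<subseteq> {y\<in>DD. y < 4*k+3}"
    proof
      fix y assume "y \<in> f ` ({y\<in>ZZ. y < k} \<times> {..<4})"
      then obtain a r where ar: "a \<in> ZZ" "a < k" "r < 4" "y = 4*a+3+r" unfolding f_def by auto
      have "(y - 3) div 4 = a" using ar by simp
      then show "y \<in> {y\<in>DD. y < 4*k+3}" unfolding DD_char using ar by auto
    qed
    show "{y\<in>DD. y < 4*k+3} \<subseteq> f ` ({y\<in>ZZ. y < k} \<times> {..<4})"
    proof
      fix y assume y: "y \<in> {y\<in>DD. y < 4*k+3}"
      then have y3: "y \<ge> 3" "(y-3) div 4 \<in> ZZ" "y < 4*k+3" unfolding DD_char by auto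
      have e: "y = f ((y-3) div 4, (y-3) mod 4)" unfolding f_def using y3 by simp
      have "(y-3) div 4 < k" using y3 by linarith
      then show "y \<in> f ` ({y\<in>ZZ. y < k} \<times> {..<4})" using e y3
        by (intro image_eqI[of y f "((y-3) div 4, (y-3) mod 4)"]) auto
    qed
  qed
  have inj: "inj_on f ({y\<in>ZZ. y < k} \<times> {..<4})"
  proof (rule inj_onI)
    fix p q assume p: "p \<in> {y\<in>ZZ. y < k} \<times> {..<4}" and q: "q \<in> {y\<in>ZZ. y < k} \<times> {..<4}"
      and e: "f p = f q"
    obtain a r where pp: "p = (a,r)" by (cases p)
    obtain b s where qq: "q = (b,s)" by (cases q)
    have rs: "r < 4" "s < 4" using p q pp qq by auto
    have e': "4*a + r = 4*b + s" using e pp qq unfolding f_def by simp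
    have "(4*a + r) div 4 = a" "(4*b+s) div 4 = b" using rs by simp_all
    then have "a = b" using e' by metis
    then show "p = q" using e' pp qq by simp
  qed
  have "card {y\<in>DD. y < 4*k+3} = 4*n"
    unfolding set_eq card_image[OF inj] card_cartesian_product cn by simp
  then have "enumerate DD (4*n) = 4*k+3" using enum_by_card[OF DD_inf xD] by simp
  then show ?thesis unfolding dd_def k_def .
qed



definition CC :: "nat \<Rightarrow> nat" where "CC K = card {k. k < K \<and> aexp (Suc k)}"

lemma CC_0: "CC 0 = 0" unfolding CC_def by simp

lemma CC_Suc: "CC (Suc K) = CC K + (if aexp (Suc K) then 1 else 0)"
proof -
  have "{k. k < Suc K \<and> aexp (Suc k)} = {k. k < K \<and> aexp (Suc k)} \<union> (if aexp (Suc K) then {K} else {})"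
    using less_Suc_eq by auto
  moreover have "finite {k. k < K \<and> aexp (Suc k)}" by simp
  ultimately show ?thesis unfolding CC_def by auto
qed

lemma ZZ_count: "card {k\<in>ZZ. k < K} + CC K = K"
proof -
  have "{k\<in>ZZ. k < K} \<union> {k. k < K \<and> aexp (Suc k)} = {..<K}" unfolding ZZ_def by auto
  moreover have "{k\<in>ZZ. k < K} \<inter> {k. k < K \<and> aexp (Suc k)} = {}" unfolding ZZ_def by auto
  ultimately show ?thesis unfolding CC_def
    by (metis (no_types, lifting) card_Un_disjoint card_lessThan finite_Un finite_lessThan)
qed

lemma zero_MM: "0 \<in> MM" unfolding MM_def by (metis bb_0 rangeI)

lemma CC_parity: "odd (CC K) \<longleftrightarrow> (K \<notin> MM \<and> (K = 0 \<or> K - 1 \<notin> MM))"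
proof (induction K)
  case 0
  then show ?case using CC_0 zero_MM by simp
next
  case (Suc K)
  have a: "aexp (Suc K) \<longleftrightarrow> Suc K \<in> MM \<or> (K \<ge> 1 \<and> K - 1 \<in> MM)"
    unfolding aexp_def by auto
  have g1: "\<not> (Suc K \<in> MM \<and> K \<in> MM)" using MM_gap[of K "Suc K"] by linarith
  have g2: "\<not> (K \<ge> 1 \<and> Suc K \<in> MM \<and> K - 1 \<in> MM)" proof
    assume h: "K \<ge> 1 \<and> Suc K \<in> MM \<and> K - 1 \<in> MM"
    then have "K - 1 + 4 \<le> Suc K" using MM_gap[of "K-1" "Suc K"] by linarith
    then show False using h by linarith
  qed
  have g3: "\<not> (K \<ge> 1 \<and> K \<in> MM \<and> K - 1 \<in> MM)" proof
    assume h: "K \<ge> 1 \<and> K \<in> MM \<and> K - 1 \<in> MM"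
    then have "K - 1 + 4 \<le> K" using MM_gap[of "K-1" "K"] by linarith
    then show False using h by linarith
  qed
  have s1: "Suc 0 \<notin> MM" using MM_mod4[of "Suc 0"] by auto
  have "odd (CC (Suc K)) \<longleftrightarrow> (odd (CC K) \<noteq> aexp (Suc K))" unfolding CC_Suc by auto
  then show ?case using Suc.IH a g1 g2 g3 s1 zero_MM by (cases "K = 0") auto
qed

lemma MM_between: "s \<in> MM \<Longrightarrow> bb t < s \<Longrightarrow> s < bb (Suc t) \<Longrightarrow> False"
proof -
  assume s: "s \<in> MM" and l: "bb t < s" and u: "s < bb (Suc t)"
  obtain v where v: "s = bb v" using s unfolding MM_def by auto
  have "t < v" using l v bb_smono by (simp add: strict_mono_less)
  moreover have "v < Suc t" using u v bb_smono by (simp add: strict_mono_less)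
  ultimately show False by simp
qed

lemma bb_in: "bb t \<in> MM" unfolding MM_def by simp

lemma CC_step:
  assumes c: "CC (bb t) = 2*t"
  shows "bb t + d \<le> bb (Suc t) \<Longrightarrow> CC (bb t + d) = 2*t + (if d \<ge> 2 then 1 else 0) + (if bb t + d = bb (Suc t) then 1 else 0)"
proof (induction d)
  case 0
  then show ?case using c bb_Suc[of t] by simp
next
  case (Suc d)
  have gap: "bb t + 8 \<le> bb (Suc t)" by (rule bb_Suc)
  define j where "j = bb t + d + 1"
  have ih: "CC (bb t + d) = 2*t + (if d \<ge> 2 then 1 else 0)" using Suc by simp
  have j1: "j \<in> MM \<longleftrightarrow> j = bb (Suc t)"
  proof
    assume "j \<in> MM"
    moreover have "bb t < j" unfolding j_def by simp
    ultimately show "j = bb (Suc t)" using MM_between[of j t] Suc.prems j_def by force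
  qed (simp add: MM_def)
  have j2: "(j \<ge> 2 \<and> j - 2 \<in> MM) \<longleftrightarrow> d = 1"
  proof
    assume h: "j \<ge> 2 \<and> j - 2 \<in> MM"
    show "d = 1"
    proof (rule ccontr)
      assume "d \<noteq> 1"
      then consider "d = 0" | "d \<ge> 2" by linarith
      then show False
      proof cases
        case 1
        then have "j - 2 < bb t" "bb t \<ge> 1" using h j_def by auto
        then have "j - 2 + 4 \<le> bb t" using MM_gap[of "j-2" "bb t"] h bb_in by auto
        then show False using j_def 1 by simp
      next
        case 2
        then have "bb t < j - 2" "j - 2 < bb (Suc t)" using j_def Suc.prems by auto
        then show False using MM_between[of "j-2" t] h by blast
      qed
    qed
  next
    assume "d = 1"
    then show "j \<ge> 2 \<and> j - 2 \<in> MM" using j_def bb_in by simp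
  qed
  have "aexp j \<longleftrightarrow> d = 1 \<or> j = bb (Suc t)" unfolding aexp_def using j1 j2 j_def by auto
  then have "CC (bb t + Suc d) = CC (bb t + d) + (if d = 1 \<or> j = bb (Suc t) then 1 else 0)"
    using CC_Suc[of "bb t + d"] j_def by simp
  then show ?case using ih j_def gap by auto
qed

lemma CC_bb: "CC (bb t) = 2*t"
proof (induction t)
  case 0
  then show ?case using CC_0 by simp
next
  case (Suc t)
  have gap: "bb t + 8 \<le> bb (Suc t)" by (rule bb_Suc)
  have "CC (bb t + (bb (Suc t) - bb t)) = 2*t + 1 + 1"
    using CC_step[OF Suc.IH, of "bb (Suc t) - bb t"] gap by simp
  then show ?case using gap by simp
qed



definition AS :: "nat set \<Rightarrow> nat" where "AS S = (\<Sum>i\<in>S. 2^(2*i-1))"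
definition TS :: "nat set \<Rightarrow> nat" where "TS S = (\<Sum>i\<in>S. 2^(i-2))"

lemma AS_Suc: "\<forall>i\<in>S. 1 < i \<Longrightarrow> AS (Suc ` S) = 4 * AS S"
proof -
  assume h: "\<forall>i\<in>S. 1 < i"
  have pw: "(2::nat)^(2*Suc i - 1) = 4 * 2^(2*i-1)" if "i \<in> S" for i
  proof -
    have e: "2*Suc i - 1 = Suc (Suc (2*i-1))" using h that by auto
    show ?thesis unfolding e power_Suc by simp
  qed
  have "AS (Suc ` S) = (\<Sum>i\<in>S. 2^(2*Suc i - 1))" unfolding AS_def by (simp add: sum.reindex)
  also have "\<dots> = (\<Sum>i\<in>S. 4 * 2^(2*i-1))" using pw by (rule sum.cong[OF refl])
  also have "\<dots> = 4 * AS S" unfolding AS_def by (simp add: sum_distrib_left)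
  finally show ?thesis .
qed

lemma TS_Suc: "\<forall>i\<in>S. 1 < i \<Longrightarrow> TS (Suc ` S) = 2 * TS S"
proof -
  assume h: "\<forall>i\<in>S. 1 < i"
  have pw: "(2::nat)^(Suc i - 2) = 2 * 2^(i-2)" if "i \<in> S" for i
  proof -
    have e: "Suc i - 2 = Suc (i-2)" using h that by auto
    show ?thesis unfolding e power_Suc by simp
  qed
  have "TS (Suc ` S) = (\<Sum>i\<in>S. 2^(Suc i - 2))" unfolding TS_def by (simp add: sum.reindex)
  also have "\<dots> = (\<Sum>i\<in>S. 2 * 2^(i-2))" using pw by (rule sum.cong[OF refl])
  also have "\<dots> = 2 * TS S" unfolding TS_def by (simp add: sum_distrib_left)
  finally show ?thesis .
qed

lemma decomp:
  assumes f: "finite S" and h: "\<forall>i\<in>S. 1 < i"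
  defines "S' \<equiv> {i. Suc i \<in> S \<and> 1 < i}"
  shows "AS S = (if 2 \<in> S then 8 else 0) + 4 * AS S'"
    and "TS S = (if 2 \<in> S then 1 else 0) + 2 * TS S'"
    and "finite S'" "\<forall>i\<in>S'. 1 < i"
proof -
  have fS': "finite S'"
    by (rule finite_subset[of _ "(\<lambda>i. i - 1) ` S"]) (use f in \<open>auto simp: S'_def intro!: image_eqI[of _ _ "Suc _"]\<close>)
  then show "finite S'" .
  show hS': "\<forall>i\<in>S'. 1 < i" unfolding S'_def by auto
  have dec: "S = (if 2 \<in> S then {2} else {}) \<union> Suc ` S'"
  proof
    show "S \<subseteq> (if 2 \<in> S then {2} else {}) \<union> Suc ` S'"
    proof
      fix x assume x: "x \<in> S"
      show "x \<in> (if 2 \<in> S then {2} else {}) \<union> Suc ` S'"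
      proof (cases "x = 2")
        case True then show ?thesis using x by simp
      next
        case False
        then have "x \<ge> 3" using h x by fastforce
        then have "x = Suc (x - 1)" "x - 1 \<in> S'" using x by (auto simp: S'_def)
        then show ?thesis by blast
      qed
    qed
  qed (auto simp: S'_def)
  have disj: "(if 2 \<in> S then {2::nat} else {}) \<inter> Suc ` S' = {}" unfolding S'_def by auto
  have "AS S = AS (if 2 \<in> S then {2} else {}) + AS (Suc ` S')"
    unfolding AS_def by (subst dec) (rule sum.union_disjoint, auto simp: fS' disj)
  also have "\<dots> = (if 2 \<in> S then 8 else 0) + 4 * AS S'"
    using AS_Suc[OF hS'] by (simp add: AS_def)
  finally show "AS S = (if 2 \<in> S then 8 else 0) + 4 * AS S'" .
  have "TS S = TS (if 2 \<in> S then {2} else {}) + TS (Suc ` S')"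
    unfolding TS_def by (subst dec) (rule sum.union_disjoint, auto simp: fS' disj)
  also have "\<dots> = (if 2 \<in> S then 1 else 0) + 2 * TS S'"
    using TS_Suc[OF hS'] by (simp add: TS_def)
  finally show "TS S = (if 2 \<in> S then 1 else 0) + 2 * TS S'" .
qed

lemma set_bb_aux: "\<forall>S. finite S \<and> (\<forall>i\<in>S. 1 < i \<and> i < B) \<longrightarrow> bb (TS S) = AS S"
proof (induction B)
  case 0
  then show ?case by (auto simp: AS_def TS_def)
next
  case (Suc B)
  show ?case
  proof (intro allI impI)
    fix S assume a: "finite S \<and> (\<forall>i\<in>S. 1 < i \<and> i < Suc B)"
    define S' where "S' = {i. Suc i \<in> S \<and> 1 < i}"
    have f: "finite S" and h: "\<forall>i\<in>S. 1 < i" using a by auto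
    note d = decomp[OF f h, folded S'_def]
    have "\<forall>i\<in>S'. 1 < i \<and> i < B" using a unfolding S'_def by auto
    then have ih: "bb (TS S') = AS S'" using Suc.IH d(3) by blast
    have "TS S div 2 = TS S'" "TS S mod 2 = (if 2 \<in> S then 1 else 0)" unfolding d(2) by auto
    then have "bb (TS S) = 4 * bb (TS S') + 8 * (if 2 \<in> S then 1 else 0)" using bb_rec[of "TS S"] by simp
    then show "bb (TS S) = AS S" unfolding d(1) ih by simp
  qed
qed

lemma set_bb: "finite S \<Longrightarrow> \<forall>i\<in>S. 1 < i \<Longrightarrow> bb (TS S) = AS S"
proof -
  assume f: "finite S" and h: "\<forall>i\<in>S. 1 < i"
  have "\<forall>i\<in>S. 1 < i \<and> i < Suc (Max S)" using h f by (auto simp: less_Suc_eq_le)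
  then show ?thesis using set_bb_aux f by blast
qed

lemma bb_set: "\<exists>S. finite S \<and> (\<forall>i\<in>S. 1 < i) \<and> bb t = AS S \<and> t = TS S"
proof (induction t rule: less_induct)
  case (less t)
  show ?case
  proof (cases "t = 0")
    case True
    then show ?thesis by (intro exI[of _ "{}"]) (simp add: AS_def TS_def)
  next
    case False
    then obtain S' where S': "finite S'" "\<forall>i\<in>S'. 1 < i" "bb (t div 2) = AS S'" "t div 2 = TS S'"
      using less by (metis div_less_dividend less_2_cases_iff neq0_conv one_less_numeral_iff semiring_norm(76))
    define S where "S = (if odd t then {2} else {}) \<union> Suc ` S'"
    have fS: "finite S" and hS: "\<forall>i\<in>S. 1 < i" unfolding S_def using S' by auto
    have S'eq: "{i. Suc i \<in> S \<and> 1 < i} = S'" unfolding S_def using S'(2) by auto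
    have two: "2 \<in> S \<longleftrightarrow> odd t" unfolding S_def using S'(2) by auto
    note d = decomp[OF fS hS, unfolded S'eq two]
    have "bb t = AS S" unfolding d(1) using bb_rec[of t] S'(3) by (cases "odd t") (simp_all add: odd_iff_mod_2_eq_one even_iff_mod_2_eq_zero)
    moreover have "t = TS S" unfolding d(2) using S'(4) by presburger
    ultimately show ?thesis using fS hS by blast
  qed
qed

lemma Rs_eq: "finite S \<Longrightarrow> \<forall>i\<in>S. 1 < i \<Longrightarrow> (\<Sum>i\<in>S. 2^(i-1) * (2^i - 1) :: nat) = AS S - 2 * TS S"
proof -
  assume f: "finite S" and h: "\<forall>i\<in>S. 1 < i"
  have pw: "(2::nat)^(i-1) * (2^i - 1) = 2^(2*i-1) - 2 * 2^(i-2)" if "i \<in> S" for i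
  proof -
    have i: "i \<ge> 2" using h that by auto
    have p1: "(2::nat)^(i-1) * (2^i - 1) = 2^(i-1) * 2^i - 2^(i-1)" by (simp add: diff_mult_distrib2)
    have p2: "(2::nat)^(i-1) * 2^i = 2^(2*i-1)" using i by (simp add: power_add[symmetric])
    have p3: "(2::nat)^(i-1) = 2 * 2^(i-2)" using i
      by (metis Suc_diff_Suc Suc_1 diff_Suc_1 less_eq_Suc_le power_Suc)
    show ?thesis by (simp only: p1 p2) (simp only: p3)
  qed
  have le: "2 * 2^(i-2) \<le> (2::nat)^(2*i-1)" if "i \<in> S" for i
  proof -
    have i: "i \<ge> 2" using h that by auto
    have "2 * 2^(i-2) = (2::nat)^(Suc (i-2))" by simp
    also have "\<dots> \<le> 2^(2*i-1)" by (rule power_increasing) (use i in auto)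
    finally show ?thesis .
  qed
  have "(\<Sum>i\<in>S. 2^(i-1) * (2^i - 1) :: nat) = (\<Sum>i\<in>S. 2^(2*i-1) - 2 * 2^(i-2))"
    using pw by (rule sum.cong[OF refl])
  also have "\<dots> = (\<Sum>i\<in>S. 2^(2*i-1)) - (\<Sum>i\<in>S. 2 * 2^(i-2))"
    by (rule sum_subtractf_nat) (use le in auto)
  also have "\<dots> = AS S - 2 * TS S" unfolding AS_def TS_def by (simp add: sum_distrib_left)
  finally show ?thesis .
qed



theorem mainTheorem11:
  shows "\<forall>n::nat. (4::int) dvd (int (dd (4*n)) + 1) \<and>
     (zz n = 1 \<longleftrightarrow>
       (\<exists>S::nat set. finite S \<and> (\<forall>i\<in>S. 1 < i) \<and>
          n = (\<Sum>i\<in>S. 2^(i-1) * (2^i - 1))))"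
proof
  fix n :: nat
  define k where "k = enumerate ZZ n"
  have dk: "dd (4*n) = 4*k+3" unfolding k_def by (rule dd_eq)
  have kZ: "k \<in> ZZ" unfolding k_def by (rule enumerate_in_set[OF ZZ_inf])
  have cn: "card {y\<in>ZZ. y < k} = n" unfolding k_def by (rule enum_card[OF ZZ_inf])
  have nk: "n + CC k = k" using ZZ_count[of k] cn by simp
  have e4: "int (dd (4*n)) + 1 = 4 * (int k + 1)" unfolding dk by simp
  have zzk: "zz n = (int (CC k) + 1) mod 2"
  proof -
    have "zz n = ((int (dd (4*n)) + 1) div 4 - int n) mod 2" unfolding zz_def ..
    also have "\<dots> = (int k + 1 - int n) mod 2" unfolding e4 by simp
    also have "int k + 1 - int n = int (CC k) + 1" using nk by linarith
    finally show ?thesis .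
  qed
  have na: "\<not> aexp (Suc k)" using kZ unfolding ZZ_def by simp
  then have k1: "Suc k \<notin> MM" "k \<ge> 1 \<Longrightarrow> k - 1 \<notin> MM" unfolding aexp_def by auto
  have par: "odd (CC k) \<longleftrightarrow> k \<notin> MM" using CC_parity[of k] k1 by auto
  have zz_iff: "zz n = 1 \<longleftrightarrow> k \<in> MM"
  proof -
    have "zz n = 1 \<longleftrightarrow> even (CC k)" unfolding zzk
      by (metis even_of_nat odd_add even_plus_one_iff mod2_eq_if zero_neq_one even_iff_mod_2_eq_zero dvd_1_left)
    then show ?thesis using par by simp
  qed
  show "(4::int) dvd (int (dd (4*n)) + 1) \<and>
     (zz n = 1 \<longleftrightarrow>
       (\<exists>S::nat set. finite S \<and> (\<forall>i\<in>S. 1 < i) \<and>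
          n = (\<Sum>i\<in>S. 2^(i-1) * (2^i - 1))))"
  proof (intro conjI)
    show "(4::int) dvd (int (dd (4*n)) + 1)" unfolding e4 by simp
    show "zz n = 1 \<longleftrightarrow>
       (\<exists>S::nat set. finite S \<and> (\<forall>i\<in>S. 1 < i) \<and>
          n = (\<Sum>i\<in>S. 2^(i-1) * (2^i - 1)))"
    proof
      assume "zz n = 1"
      then have "k \<in> MM" using zz_iff by simp
      then obtain t where t: "k = bb t" unfolding MM_def by auto
      obtain S where S: "finite S" "\<forall>i\<in>S. 1 < i" "bb t = AS S" "t = TS S" using bb_set by blast
      have "n = bb t - 2*t" using nk t CC_bb[of t] by simp
      then have "n = (\<Sum>i\<in>S. 2^(i-1) * (2^i - 1))" using Rs_eq[OF S(1,2)] S(3,4) by simp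
      then show "\<exists>S::nat set. finite S \<and> (\<forall>i\<in>S. 1 < i) \<and> n = (\<Sum>i\<in>S. 2^(i-1) * (2^i - 1))"
        using S(1,2) by blast
    next
      assume "\<exists>S::nat set. finite S \<and> (\<forall>i\<in>S. 1 < i) \<and> n = (\<Sum>i\<in>S. 2^(i-1) * (2^i - 1))"
      then obtain S where S: "finite S" "\<forall>i\<in>S. 1 < i" "n = (\<Sum>i\<in>S. 2^(i-1) * (2^i - 1))" by blast
      define t where "t = TS S"
      have bt: "bb t = AS S" unfolding t_def by (rule set_bb[OF S(1,2)])
      have n2: "n = bb t - 2*t" using S(3) Rs_eq[OF S(1,2)] bt t_def by simp
      have "odd (Suc (bb t))" using bb_mod4[of t] by presburger
      then have bZ: "bb t \<in> ZZ" unfolding ZZ_def using aexp_odd by blast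
      have "card {y\<in>ZZ. y < bb t} + 2*t = bb t" using ZZ_count[of "bb t"] CC_bb[of t] by simp
      then have "card {y\<in>ZZ. y < bb t} = n" using n2 by simp
      then have "enumerate ZZ n = bb t" using enum_by_card[OF ZZ_inf bZ] by simp
      then have "k \<in> MM" unfolding k_def MM_def by simp
      then show "zz n = 1" using zz_iff by simp
    qed
  qed
qed


end
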